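(* Let $\Lambda\ge1$ and consider any connectivity of $K$ users to $\Lambda$ caches, any demand vector in which the $K$ users request pairwise distinct files, and the associated side information graph $G$. Let $\bm c=(c_1,\dots,c_\Lambda)$ be any permutation of $[\Lambda]$. Let $\mathcal J$ be the set of vertices consisting of: (i) all vertices $W_{d_u,\mathcal T}$, $\mathcal T\subseteq[\Lambda]$, for every user $u$ with $\mathcal U_u=\emptyset$; and (ii) for every user $u$ with $\mathcal U_u\neq\emptyset$, letting $i$ be the unique index such that $c_i\in\mathcal U_u\subseteq\{c_1,\dots,c_i\}$, all vertices $W_{d_u,\mathcal T}$ with $\mathcal T\subseteq[\Lambda]\setminus\{c_1,\dots,c_i\}$. Then the subgraph of $G$ induced by $\mathcal J$ contains no directed cycle.
   Context: Setting: $N$ files $W_1,\dots,W_N$, each partitioned into disjoint subfiles $W_{n,\mathcal T}$ indexed by $\mathcal T\subseteq[\Lambda]$, where $W_{n,\mathcal T}$ is the part stored exactly by the caches in $\mathcal T$. Each user $u$ is connected to the set of caches $\mathcal U_u\subseteq[\Lambda]$ (possibly empty) and requests file $W_{d_u}$, with the $d_u$ pairwise distinct. The side information set of user $u$ is $\{W_{n,\mathcal T}: n\in[N],\ \mathcal T\cap\mathcal U_u\neq\emptyset\}$ and its desired set is $\{W_{d_u,\mathcal T}:\mathcal T\subseteq[\Lambda]\setminus\mathcal U_u\}$. The side information graph $G$ is the directed graph whose vertices are all desired subfiles $W_{d_u,\mathcal T}$ ($u$ a user, $\mathcal T\subseteq[\Lambda]\setminus\mathcal U_u$), with a directed edge from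 a vertex desired by user $p$ to a vertex desired by user $q\ne p$ if and only if the former subfile belongs to the side information set of $q$. *)

theory Defs
  imports Main
begin

text \<open>Caches are [\<Lambda>] = {1..\<Lambda>}, users are [K] = {1..K}, files are [N] = {1..N}.
  A subfile W_{n,T} is represented by the pair (n, T).  U u is the set of caches user u
  is connected to, d u the file user u requests.\<close>

definition side_info :: "nat \<Rightarrow> nat \<Rightarrow> (nat \<Rightarrow> nat set) \<Rightarrow> nat \<Rightarrow> (nat \<times> nat set) set" where
  "side_info N \<Lambda> U u = {(n, T). n \<in> {1..N} \<and> T \<subseteq> {1..\<Lambda>} \<and> T \<inter> U u \<noteq> {}}"

definition desired :: "nat \<Rightarrow> (nat \<Rightarrow> nat set) \<Rightarrow> (nat \<Rightarrow> nat) \<Rightarrow> nat \<Rightarrow> (nat \<times> nat set) set" where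
  "desired \<Lambda> U d u = {(d u, T) | T. T \<subseteq> {1..\<Lambda>} - U u}"

definition sig_vertices :: "nat \<Rightarrow> nat \<Rightarrow> (nat \<Rightarrow> nat set) \<Rightarrow> (nat \<Rightarrow> nat) \<Rightarrow> (nat \<times> nat set) set" where
  "sig_vertices K \<Lambda> U d = (\<Union>u\<in>{1..K}. desired \<Lambda> U d u)"

definition sig_edges :: "nat \<Rightarrow> nat \<Rightarrow> nat \<Rightarrow> (nat \<Rightarrow> nat set) \<Rightarrow> (nat \<Rightarrow> nat)
    \<Rightarrow> ((nat \<times> nat set) \<times> (nat \<times> nat set)) set" where
  "sig_edges N K \<Lambda> U d = {(x, y) | x y p q. p \<in> {1..K} \<and> q \<in> {1..K} \<and> p \<noteq> q \<and>
      x \<in> desired \<Lambda> U d p \<and> y \<in> desired \<Lambda> U d q \<and> x \<in> side_info N \<Lambda> U q}"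

definition J_set :: "nat \<Rightarrow> nat \<Rightarrow> (nat \<Rightarrow> nat set) \<Rightarrow> (nat \<Rightarrow> nat) \<Rightarrow> (nat \<Rightarrow> nat)
    \<Rightarrow> (nat \<times> nat set) set" where
  "J_set K \<Lambda> U d c =
     {(d u, T) | u T. u \<in> {1..K} \<and> U u = {} \<and> T \<subseteq> {1..\<Lambda>}}
   \<union> {(d u, T) | u T i. u \<in> {1..K} \<and> U u \<noteq> {} \<and> i \<in> {1..\<Lambda>} \<and> c i \<in> U u \<and>
        U u \<subseteq> c ` {1..i} \<and> T \<subseteq> {1..\<Lambda>} - c ` {1..i}}"

end

theory Submission
  imports Defs
begin

definition rk :: "nat \<Rightarrow> (nat \<Rightarrow> nat set) \<Rightarrow> (nat \<Rightarrow> nat) \<Rightarrow> nat \<Rightarrow> nat" where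
  "rk \<Lambda> U c u = (if U u = {} then 0 else
     (LEAST i. i\<in>{1..\<Lambda>} \<and> c i \<in> U u \<and> U u \<subseteq> c`{1..i}))"

lemma rk_eq:
  assumes inj: "inj_on c {1..\<Lambda>}" and i: "i\<in>{1..\<Lambda>}" "c i \<in> U u" "U u \<subseteq> c`{1..i}"
  shows "rk \<Lambda> U c u = i"
proof -
  have uniq: "j = i" if j: "j\<in>{1..\<Lambda>}" "c j \<in> U u" "U u \<subseteq> c`{1..j}" for j
  proof -
    obtain a where a: "a \<in> {1..i}" "c j = c a" using j(2) i(3) by blast
    hence "j = a" using inj j(1) i(1) by (metis inj_onD atLeastAtMost_iff order_trans)
    hence ji: "j \<le> i" using a by auto
    obtain b where b: "b \<in> {1..j}" "c i = c b" using i(2) j(3) by blast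
    hence "i = b" using inj j(1) i(1) by (metis inj_onD atLeastAtMost_iff order_trans)
    hence "i \<le> j" using b by auto
    thus ?thesis using ji by simp
  qed
  have ne: "U u \<noteq> {}" using i by auto
  have "(LEAST i. i\<in>{1..\<Lambda>} \<and> c i \<in> U u \<and> U u \<subseteq> c`{1..i}) = i"
    apply (rule Least_equality)
    using i apply blast
    using uniq by (metis order_refl)
  thus ?thesis using ne by (simp add: rk_def)
qed

lemma J_mem: "(n,T) \<in> J_set K \<Lambda> U d c \<Longrightarrow> \<exists>u\<in>{1..K}. d u = n \<and> (U u = {} \<or> (\<exists>i. i\<in>{1..\<Lambda>} \<and> c i \<in> U u \<and> U u \<subseteq> c`{1..i} \<and> T \<subseteq> {1..\<Lambda>} - c`{1..i}))"
  unfolding J_set_def by auto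
lemma E_mem: "(x,y) \<in> sig_edges N K \<Lambda> U d \<Longrightarrow> \<exists>p q. p \<in> {1..K} \<and> q \<in> {1..K} \<and> x \<in> desired \<Lambda> U d p \<and>
      y \<in> desired \<Lambda> U d q \<and> x \<in> side_info N \<Lambda> U q"
  unfolding sig_edges_def by auto

lemma des_mem: "x \<in> desired \<Lambda> U d p \<Longrightarrow> \<exists>T. x = (d p, T)"
  unfolding desired_def by blast
lemma si_mem: "(n,T) \<in> side_info N \<Lambda> U q \<Longrightarrow> T \<inter> U q \<noteq> {}"
  unfolding side_info_def by blast

theorem lemma2:
  fixes N K \<Lambda> :: nat and U :: "nat \<Rightarrow> nat set" and d c :: "nat \<Rightarrow> nat"
  assumes "\<Lambda> \<ge> 1"
    and "\<forall>u\<in>{1..K}. U u \<subseteq> {1..\<Lambda>}"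
    and "\<forall>u\<in>{1..K}. d u \<in> {1..N}"
    and "inj_on d {1..K}"
    and "bij_betw c {1..\<Lambda>} {1..\<Lambda>}"
  shows "acyclic (sig_edges N K \<Lambda> U d \<inter> (J_set K \<Lambda> U d c \<times> J_set K \<Lambda> U d c))"
proof -
  have injc: "inj_on c {1..\<Lambda>}" using assms(5) by (simp add: bij_betw_def)
  define f where "f x = rk \<Lambda> U c (THE u. u\<in>{1..K} \<and> d u = fst x)" for x :: "nat \<times> nat set"
  have fd: "f (d u, T) = rk \<Lambda> U c u" if "u\<in>{1..K}" for u T
  proof -
    have "(THE v. v\<in>{1..K} \<and> d v = d u) = u"
      using that assms(4) by (metis (mono_tags, lifting) inj_onD the_equality)
    thus ?thesis by (simp add: f_def)
  qed
  define R where "R = sig_edges N K \<Lambda> U d \<inter> (J_set K \<Lambda> U d c \<times> J_set K \<Lambda> U d c)"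
  have key: "f x < f y" if xy: "(x,y) \<in> R" for x y
  proof -
    have xyE: "(x,y) \<in> sig_edges N K \<Lambda> U d" and xJ: "x \<in> J_set K \<Lambda> U d c"
      and yJ: "y \<in> J_set K \<Lambda> U d c" using xy unfolding R_def by blast+
    obtain p q where pq: "p \<in> {1..K}" "q \<in> {1..K}" "x \<in> desired \<Lambda> U d p"
      "y \<in> desired \<Lambda> U d q" "x \<in> side_info N \<Lambda> U q"
      using E_mem[OF xyE] by blast
    obtain T where xT: "x = (d p, T)" using des_mem[OF pq(3)] by blast
    obtain T' where yT: "y = (d q, T')" using des_mem[OF pq(4)] by blast
    have "T \<inter> U q \<noteq> {}" using si_mem pq(5) xT by metis
    then obtain e where e: "e \<in> T" "e \<in> U q" by blast
    have Uq: "U q \<noteq> {}" using e by auto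
    from J_mem[of "d q" T'] yJ yT obtain u where uq: "u\<in>{1..K}" "d u = d q" and
      hq: "(U u = {}) \<or> (\<exists>i. i \<in> {1..\<Lambda>} \<and> c i \<in> U u \<and>
        U u \<subseteq> c ` {1..i} \<and> T' \<subseteq> {1..\<Lambda>} - c ` {1..i})" by blast
    have uq': "u = q" by (rule inj_onD[OF assms(4) uq(2) uq(1) pq(2)])
    have hq2: "\<exists>i. i \<in> {1..\<Lambda>} \<and> c i \<in> U q \<and>
        U q \<subseteq> c ` {1..i} \<and> T' \<subseteq> {1..\<Lambda>} - c ` {1..i}"
      using hq Uq unfolding uq' by (metis (no_types, lifting))
    then obtain i' where i': "i'\<in>{1..\<Lambda>}" "c i' \<in> U q" "U q \<subseteq> c`{1..i'}"
      by (elim exE conjE)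
    have rkq: "rk \<Lambda> U c q = i'" by (rule rk_eq[of c \<Lambda> i' U q, OF injc i'(1) i'(2) i'(3)])
    have fy: "f y = i'" unfolding yT fd[OF pq(2)] rkq ..
    obtain j where j: "j \<in> {1..i'}" "e = c j" using i'(3) e(2) by blast
    from J_mem[of "d p" T] xJ xT obtain u where u: "u\<in>{1..K}" "d u = d p" and
        h: "(U u = {}) \<or> (\<exists>i. i \<in> {1..\<Lambda>} \<and> c i \<in> U u \<and>
        U u \<subseteq> c ` {1..i} \<and> T \<subseteq> {1..\<Lambda>} - c ` {1..i})" by blast
    have up: "u = p" by (rule inj_onD[OF assms(4) u(2) u(1) pq(1)])
    show ?thesis
    proof (cases "U p = {}")
      case True
      hence "rk \<Lambda> U c p = 0" by (simp add: rk_def)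
      hence "f x = 0" unfolding xT fd[OF pq(1)] .
      moreover have "1 \<le> i'" using i'(1) by simp
      ultimately show ?thesis using fy by simp
    next
      case False
      have h2: "\<exists>i. i \<in> {1..\<Lambda>} \<and> c i \<in> U p \<and>
        U p \<subseteq> c ` {1..i} \<and> T \<subseteq> {1..\<Lambda>} - c ` {1..i}"
        using h False unfolding up by (metis (no_types, lifting))
      then obtain i where i: "i \<in> {1..\<Lambda>}" "c i \<in> U p" "U p \<subseteq> c ` {1..i}"
        "T \<subseteq> {1..\<Lambda>} - c ` {1..i}" by (elim exE conjE)
      have rkp: "rk \<Lambda> U c p = i" by (rule rk_eq[of c \<Lambda> i U p, OF injc i(1) i(2) i(3)])
      have fx: "f x = i" unfolding xT fd[OF pq(1)] rkp ..
      have "\<not> j \<le> i"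
      proof
        assume "j \<le> i"
        hence "j \<in> {1..i}" using j(1) by simp
        hence "c j \<in> c ` {1..i}" by (rule imageI)
        thus False using e(1) j(2) i(4) by blast
      qed
      moreover have "j \<le> i'" using j(1) by simp
      ultimately show ?thesis using fx fy by simp
    qed
  qed
  define S where "S = {(x,y). f x < (f y :: nat)}"
  have RS: "R \<subseteq> S" using key by (auto simp: S_def)
  have "trans S" by (auto simp: S_def trans_def)
  hence "R\<^sup>+ \<subseteq> S" using RS by (metis trancl_id trancl_mono subrelI)
  hence "acyclic R" unfolding acyclic_def S_def by blast
  thus ?thesis unfolding R_def .
qed

end
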